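(* For all integers $n, k \geq 1$ with $n \geq k$, $$\sum_{i=k}^{n} \frac{s(n,i)\, S(i,k)}{i} = (-1)^{n-k} \frac{(n-1)!}{k!} \sum_{\ell=0}^{n-k} \frac{(-1)^{\ell}}{\ell!} B_{\ell}^*.$$
   Context: For $n \geq 0$, $X^{\underline{n}} := X(X-1)\cdots(X-n+1)$ ($X^{\underline{0}}=1$). The (signed) Stirling numbers of the first kind $s(n,k)$ are defined by $X^{\underline{n}} = \sum_{k=0}^{n} s(n,k) X^k$, and the Stirling numbers of the second kind $S(n,k)$ by $X^n = \sum_{k=0}^{n} S(n,k) X^{\underline{k}}$ (for all $n\ge 0$), with $s(n,k)=S(n,k)=0$ when $n<k$. The Bernoulli numbers of the second kind $B_n^*$ are defined by $\frac{t}{\log(1+t)} = \sum_{n \ge 0} B_n^* \frac{t^n}{n!}$. *)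

theory Defs
  imports "HOL-Combinatorics.Stirling" "HOL-Computational_Algebra.Formal_Power_Series"
begin

text \<open>Signed Stirling numbers of the first kind s(n,k) = (-1)^(n-k) c(n,k),
  where the library's stirling n k is the unsigned version c(n,k).\<close>
definition stirling1_signed :: "nat \<Rightarrow> nat \<Rightarrow> int" where
  "stirling1_signed n k = (-1) ^ (n - k) * int (stirling n k)"

text \<open>Bernoulli numbers of the second kind: t / log(1+t) = sum B*_n t^n / n!.
  fps_ln 1 is the power series of log(1+t).\<close>
definition bernoulli2 :: "nat \<Rightarrow> real" where
  "bernoulli2 n = fact n * fps_nth (fps_X / fps_ln (1::real)) n"

end

theory Submission
  imports Defs
begin
unbundle fps_syntax


lemma s1_Suc_Suc:
  "stirling1_signed (Suc n) (Suc j) = stirling1_signed n j - int n * stirling1_signed n (Suc j)"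
proof (cases "j < n")
  case True
  then obtain d where d: "n - j = Suc d" by (metis Suc_diff_Suc)
  hence "n - Suc j = d" by simp
  with d show ?thesis by (simp add: stirling1_signed_def algebra_simps)
next
  case False
  hence "stirling n (Suc j) = 0" by simp
  moreover have "n - j = 0" using False by simp
  ultimately show ?thesis by (simp add: stirling1_signed_def)
qed

lemma s1_0: "stirling1_signed 0 i = (if i = 0 then 1 else 0)"
  by (cases i) (simp_all add: stirling1_signed_def)

lemma s1_Suc_0: "stirling1_signed (Suc n) 0 = 0"
  by (simp add: stirling1_signed_def)

lemma s1_less: "m < i \<Longrightarrow> stirling1_signed m i = 0"
  by (simp add: stirling1_signed_def)

lemma orth:
  "(\<Sum>i\<le>m. stirling1_signed m i * int (Stirling i k)) = (if m = k then 1 else 0)"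
proof (induction m arbitrary: k)
  case 0
  then show ?case by (cases k) (simp_all add: s1_0)
next
  case (Suc m)
  have "(\<Sum>i\<le>Suc m. stirling1_signed (Suc m) i * int (Stirling i k))
      = (\<Sum>j\<le>m. stirling1_signed (Suc m) (Suc j) * int (Stirling (Suc j) k))"
    unfolding sum.atMost_Suc_shift by (simp add: s1_Suc_0)
  also have "\<dots> = (\<Sum>j\<le>m. stirling1_signed m j * int (Stirling (Suc j) k))
      - int m * (\<Sum>j\<le>m. stirling1_signed m (Suc j) * int (Stirling (Suc j) k))"
    by (simp add: s1_Suc_Suc algebra_simps sum_subtractf sum_distrib_left)
  also have "\<dots> = (if Suc m = k then 1 else 0)"
  proof (cases k)
    case 0
    then show ?thesis by simp
  next
    case (Suc k')
    have A: "(\<Sum>j\<le>m. stirling1_signed m j * int (Stirling (Suc j) k))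
       = int (Suc k') * (\<Sum>j\<le>m. stirling1_signed m j * int (Stirling j (Suc k')))
         + (\<Sum>j\<le>m. stirling1_signed m j * int (Stirling j k'))"
      by (simp add: Suc algebra_simps sum.distrib sum_distrib_left)
    have B: "(\<Sum>j\<le>m. stirling1_signed m (Suc j) * int (Stirling (Suc j) k))
        = (\<Sum>j\<le>m. stirling1_signed m j * int (Stirling j (Suc k')))"
    proof -
      have "(\<Sum>j\<le>Suc m. stirling1_signed m j * int (Stirling j (Suc k')))
          = (\<Sum>j\<le>m. stirling1_signed m (Suc j) * int (Stirling (Suc j) (Suc k')))"
        unfolding sum.atMost_Suc_shift by simp
      moreover have "(\<Sum>j\<le>Suc m. stirling1_signed m j * int (Stirling j (Suc k')))
          = (\<Sum>j\<le>m. stirling1_signed m j * int (Stirling j (Suc k')))"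
        by (simp add: s1_less)
      ultimately show ?thesis using Suc by simp
    qed
    show ?thesis unfolding A B Suc.IH using Suc by auto
  qed
  finally show ?case .
qed



lemma coeff_gen:
  fixes f g :: "real fps"
  assumes "(1 + fps_X) * fps_deriv f = fps_const c * g"
  shows "real (Suc n) * f $ Suc n + real n * f $ n = c * g $ n"
proof -
  have "((1 + fps_X) * fps_deriv f) $ n = (fps_const c * g) $ n" using assms by simp
  thus ?thesis by (cases n) (simp_all add: distrib_right algebra_simps)
qed

abbreviation LL :: "real fps" where "LL \<equiv> fps_ln 1"

lemma LL_rec:
  "real (Suc n) * (LL ^ Suc i) $ Suc n + real n * (LL ^ Suc i) $ n = real (Suc i) * (LL ^ i) $ n"
proof -
  have D: "fps_deriv (LL ^ Suc i) = fps_const (real (Suc i)) * inverse (1 + fps_X) * LL ^ i"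
    using fps_deriv_power[of LL "Suc i"] by (simp add: fps_ln_deriv del: power_Suc of_nat_Suc)
  have "(1 + fps_X) * fps_deriv (LL ^ Suc i) = fps_const (real (Suc i)) * LL ^ i"
  proof -
    have inv: "(1 + fps_X) * inverse (1 + fps_X) = (1::real fps)" by (rule inverse_mult_eq_1') simp
    have "(1 + fps_X) * fps_deriv (LL ^ Suc i) = fps_const (real (Suc i)) * ((1 + fps_X) * inverse (1 + fps_X)) * LL ^ i"
      unfolding D by (simp only: mult_ac)
    thus ?thesis unfolding inv by simp
  qed
  from coeff_gen[OF this, of n] show ?thesis .
qed

lemma egf:
  "real_of_int (stirling1_signed n i) = fact n / fact i * (LL ^ i) $ n"
proof (induction n arbitrary: i)
  case 0
  then show ?case by (simp add: s1_0 fps_nth_power_0)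
next
  case (Suc n)
  show ?case
  proof (cases i)
    case 0
    then show ?thesis by (simp add: s1_Suc_0)
  next
    case (Suc j)
    have r: "(LL ^ Suc j) $ Suc n = (real (Suc j) * (LL ^ j) $ n - real n * (LL ^ Suc j) $ n) / real (Suc n)"
      using LL_rec[of n j] by (simp add: field_simps)
    have "real_of_int (stirling1_signed (Suc n) (Suc j))
        = fact n / fact j * (LL ^ j) $ n - real n * (fact n / fact (Suc j) * (LL ^ Suc j) $ n)"
      using Suc.IH[of j] Suc.IH[of "Suc j"] by (simp add: s1_Suc_Suc)
    also have "\<dots> = fact (Suc n) / fact (Suc j) * (LL ^ Suc j) $ Suc n"
      unfolding r by (simp add: field_simps del: of_nat_Suc)
    finally show ?thesis using Suc by simp
  qed
qed



definition MM :: "real fps" where "MM = Abs_fps (\<lambda>n. (-1) ^ n / real (Suc n))"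
definition HH :: "real fps" where "HH = inverse MM * inverse (1 + fps_X)"

lemma LL_eq: "LL = fps_X * MM"
  by (intro fps_ext) (simp add: fps_ln_def MM_def of_nat_diff)

lemma MM0: "MM $ 0 = 1" by (simp add: MM_def)

lemma bern: "bernoulli2 l = fact l * inverse MM $ l"
proof -
  have "fps_X / LL = inverse MM"
  proof -
    have "MM \<noteq> 0" using MM0 by auto
    have "fps_X / LL = (fps_X * 1) / (fps_X * MM)" by (simp add: LL_eq)
    also have "\<dots> = 1 / MM" by (rule div_mult_mult1) simp
    also have "\<dots> = inverse MM" using MM0 by (simp add: fps_divide_unit)
    finally show ?thesis .
  qed
  thus ?thesis by (simp add: bernoulli2_def)
qed

lemma key_fps: "fps_X * fps_deriv (LL ^ i) = fps_const (real i) * LL ^ i * HH"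
proof (cases i)
  case 0 then show ?thesis by simp
next
  case (Suc j)
  have "fps_X * fps_deriv (LL ^ i) = fps_const (real i) * inverse (1 + fps_X) * (fps_X * LL ^ j)"
    using fps_deriv_power[of LL i] by (simp add: Suc fps_ln_deriv mult_ac del: power_Suc)
  also have "fps_X * LL ^ j = LL ^ i * inverse MM"
  proof -
    have "LL ^ i * inverse MM = fps_X * LL ^ j * (MM * inverse MM)"
      by (simp add: Suc LL_eq algebra_simps)
    also have "MM * inverse MM = 1" using MM0 by (intro inverse_mult_eq_1') simp
    finally show ?thesis by simp
  qed
  finally show ?thesis by (simp add: HH_def algebra_simps)
qed

lemma key_coeff:
  "real n * (LL ^ i) $ n = real i * (\<Sum>m=0..n. (LL ^ i) $ m * HH $ (n - m))"
proof -
  have "(fps_X * fps_deriv (LL ^ i)) $ n = (fps_const (real i) * (LL ^ i * HH)) $ n"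
    by (simp add: key_fps mult.assoc)
  thus ?thesis by (cases n) (simp_all add: fps_mult_nth[of "LL ^ i" HH] fps_mult_left_const_nth)
qed

lemma HH_nth: "HH $ j = (\<Sum>l=0..j. (-1) ^ (j - l) * (bernoulli2 l / fact l))"
  by (simp add: HH_def fps_mult_nth fps_inverse_fps_X_plus1 bern mult.commute)

lemma inner:
  assumes "m \<le> n" "k \<ge> 1"
  shows "(\<Sum>i=k..n. real (Stirling i k) / fact i * (LL ^ i) $ m) = (if m = k then 1 / fact k else 0)"
proof -
  have "(\<Sum>i=k..n. real (Stirling i k) / fact i * (LL ^ i) $ m)
      = (\<Sum>i=k..n. real (Stirling i k) * real_of_int (stirling1_signed m i) / fact m)"
    by (intro sum.cong refl) (simp add: egf)
  also have "\<dots> = (\<Sum>i\<le>n. real (Stirling i k) * real_of_int (stirling1_signed m i) / fact m)"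
  proof (rule sum.mono_neutral_left)
    show "\<forall>i\<in>{..n} - {k..n}. real (Stirling i k) * real_of_int (stirling1_signed m i) / fact m = 0"
      by auto
  qed auto
  also have "\<dots> = (\<Sum>i\<le>m. real (Stirling i k) * real_of_int (stirling1_signed m i) / fact m)"
  proof (rule sum.mono_neutral_right)
    show "\<forall>i\<in>{..n} - {..m}. real (Stirling i k) * real_of_int (stirling1_signed m i) / fact m = 0"
      by (auto simp: s1_less)
  qed (use assms in auto)
  also have "\<dots> = real_of_int (\<Sum>i\<le>m. stirling1_signed m i * int (Stirling i k)) / fact m"
    by (simp add: sum_divide_distrib mult.commute)
  also have "\<dots> = (if m = k then 1 / fact k else 0)"
    by (simp add: orth)
  finally show ?thesis .
qed

lemma sgn_pow: "l \<le> j \<Longrightarrow> (-1::real) ^ (j - l) = (-1) ^ j * (-1) ^ l"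
proof -
  assume "l \<le> j"
  hence "(-1::real) ^ j = (-1) ^ (j - l) * (-1) ^ l" by (simp add: power_add[symmetric])
  hence "(-1::real) ^ j * (-1) ^ l = (-1) ^ (j - l) * ((-1) ^ l * (-1) ^ l)" by simp
  also have "(-1::real) ^ l * (-1) ^ l = 1" by (simp add: power_add[symmetric] flip: power_add)
  finally show ?thesis by simp
qed

lemma aux_alg:
  fixes a b x nn S :: real
  assumes "real i > 0" "b \<noteq> 0"
  shows "a / b * (real i * x / nn) * S / real i = a / nn * (S / b * x)"
  using assms by (simp add: field_simps)

theorem corollary5:
  fixes n k :: nat
  assumes "k \<ge> 1" and "n \<ge> k"
  shows "(\<Sum>i=k..n. of_int (stirling1_signed n i) * real (Stirling i k) / real i)
    = (-1) ^ (n - k) * (fact (n - 1) / fact k)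
      * (\<Sum>l=0..n-k. (-1) ^ l / fact l * bernoulli2 l)"
proof -
  have n0: "n \<ge> 1" using assms by simp
  have "(\<Sum>i=k..n. of_int (stirling1_signed n i) * real (Stirling i k) / real i)
     = (\<Sum>i=k..n. fact n / real n * (real (Stirling i k) / fact i * (\<Sum>m=0..n. (LL ^ i) $ m * HH $ (n - m))))"
  proof (intro sum.cong refl)
    fix i assume i: "i \<in> {k..n}"
    hence ip: "real i > 0" using assms by auto
    have e: "(LL ^ i) $ n = real i * (\<Sum>m=0..n. (LL ^ i) $ m * HH $ (n - m)) / real n"
      using key_coeff[of n i] n0 by (simp add: field_simps)
    show "of_int (stirling1_signed n i) * real (Stirling i k) / real i
      = fact n / real n * (real (Stirling i k) / fact i * (\<Sum>m=0..n. (LL ^ i) $ m * HH $ (n - m)))"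
      unfolding egf e using ip aux_alg[of i "fact i" "fact n" _ n "real (Stirling i k)"] by simp
  qed
  also have "\<dots> = fact n / real n * (\<Sum>m=0..n. HH $ (n - m) * (\<Sum>i=k..n. real (Stirling i k) / fact i * (LL ^ i) $ m))"
  proof -
    have "(\<Sum>i=k..n. fact n / real n * (real (Stirling i k) / fact i * (\<Sum>m=0..n. (LL ^ i) $ m * HH $ (n - m))))
      = fact n / real n * (\<Sum>i=k..n. \<Sum>m=0..n. HH $ (n - m) * (real (Stirling i k) / fact i * (LL ^ i) $ m))"
      by (simp add: sum_distrib_left mult_ac)
    also have "\<dots> = fact n / real n * (\<Sum>m=0..n. \<Sum>i=k..n. HH $ (n - m) * (real (Stirling i k) / fact i * (LL ^ i) $ m))"
      by (subst sum.swap) (rule refl)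
    also have "\<dots> = fact n / real n * (\<Sum>m=0..n. HH $ (n - m) * (\<Sum>i=k..n. real (Stirling i k) / fact i * (LL ^ i) $ m))"
      by (simp add: sum_distrib_left)
    finally show ?thesis .
  qed
  also have "\<dots> = fact n / real n * (\<Sum>m=0..n. HH $ (n - m) * (if m = k then 1 / fact k else 0))"
  proof -
    have "\<And>m. m \<in> {0..n} \<Longrightarrow> HH $ (n - m) * (\<Sum>i=k..n. real (Stirling i k) / fact i * (LL ^ i) $ m) = HH $ (n - m) * (if m = k then 1 / fact k else 0)"
      using inner assms by simp
    hence "(\<Sum>m=0..n. HH $ (n - m) * (\<Sum>i=k..n. real (Stirling i k) / fact i * (LL ^ i) $ m)) = (\<Sum>m=0..n. HH $ (n - m) * (if m = k then 1 / fact k else 0))"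
      by (rule sum.cong[OF refl])
    thus ?thesis by simp
  qed
  also have "\<dots> = fact n / real n * (HH $ (n - k) / fact k)"
    using assms by (simp add: if_distrib[of "\<lambda>x. _ * x"] sum.delta cong: if_cong)
  also have "\<dots> = fact (n - 1) * (HH $ (n - k) / fact k)"
    using n0 by (cases n) simp_all
  also have "HH $ (n - k) = (-1) ^ (n - k) * (\<Sum>l=0..n-k. (-1) ^ l / fact l * bernoulli2 l)"
    unfolding HH_nth sum_distrib_left
  proof (intro sum.cong refl)
    fix l assume "l \<in> {0..n-k}"
    hence "(-1::real) ^ (n - k - l) = (-1) ^ (n - k) * (-1) ^ l" by (intro sgn_pow) simp
    thus "(-1) ^ (n - k - l) * (bernoulli2 l / fact l) = (-1) ^ (n - k) * ((-1) ^ l / fact l * bernoulli2 l)"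
      by simp
  qed
  finally show ?thesis by simp
qed

end
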